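(* For each integer $k\ge 2$, a $k$-regular friendship digraph exists if and only if there exists a $(k^2-k+1,k,1)$-SBIBD.
   Context: All digraphs are finite and have neither loops nor parallel arcs (a pair of opposite arcs $(u,v)$ and $(v,u)$ is allowed). A friendship digraph is a nontrivial digraph (at least two vertices) in which any two distinct vertices have exactly one common out-neighbor. A $k$-regular digraph is one in which every vertex has outdegree $k$ and indegree $k$. A $(v,k,\lambda)$-SBIBD (symmetric balanced incomplete block design) is a set $V$ of $v$ varieties (points) together with a collection of $v$ blocks, each a $k$-element subset of $V$, such that each variety lies in exactly $k$ blocks and each pair of distinct varieties lies in exactly $\lambda$ blocks. *)

theory Defs
  imports Main
begin

definition digraph :: "'a set \<Rightarrow> ('a \<times> 'a) set \<Rightarrow> bool" where
  "digraph V A \<longleftrightarrow> finite V \<and> A \<subseteq> V \<times> V \<and> (\<forall>x. (x, x) \<notin> A)"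

definition friendship_digraph :: "'a set \<Rightarrow> ('a \<times> 'a) set \<Rightarrow> bool" where
  "friendship_digraph V A \<longleftrightarrow> digraph V A \<and> card V \<ge> 2 \<and>
     (\<forall>x\<in>V. \<forall>y\<in>V. x \<noteq> y \<longrightarrow> (\<exists>!z. (x, z) \<in> A \<and> (y, z) \<in> A))"

definition regular_digraph :: "nat \<Rightarrow> 'a set \<Rightarrow> ('a \<times> 'a) set \<Rightarrow> bool" where
  "regular_digraph k V A \<longleftrightarrow> digraph V A \<and>
     (\<forall>x\<in>V. card {y. (x, y) \<in> A} = k \<and> card {y. (y, x) \<in> A} = k)"

text \<open>A (v,k,lambda)-SBIBD: point set P of size v and a family of v blocks B i (i in I,
  card I = v; repeated blocks allowed, as in "a collection of blocks").\<close>
definition sbibd :: "nat \<Rightarrow> nat \<Rightarrow> nat \<Rightarrow> 'a set \<Rightarrow> 'i set \<Rightarrow> ('i \<Rightarrow> 'a set) \<Rightarrow> bool" where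
  "sbibd v k lam P I B \<longleftrightarrow> finite P \<and> card P = v \<and> finite I \<and> card I = v \<and>
     (\<forall>i\<in>I. B i \<subseteq> P \<and> card (B i) = k) \<and>
     (\<forall>x\<in>P. card {i\<in>I. x \<in> B i} = k) \<and>
     (\<forall>x\<in>P. \<forall>y\<in>P. x \<noteq> y \<longrightarrow> card {i\<in>I. x \<in> B i \<and> y \<in> B i} = lam)"

end

theory Submission imports Defs begin

lemma derange_step:
  assumes finP: "finite P" and finI: "finite I" and cI: "card I = card P"
    and Bsub: "\<forall>i\<in>I. B i \<subseteq> P" and cnt: "\<forall>x\<in>P. card {i\<in>I. x \<in> B i} = k"
    and cB: "\<forall>i\<in>I. card (B i) = k" and big: "card P < 2 * (card P - k)"
  shows "bij_betw \<phi> P I \<and> card {x\<in>P. x \<in> B (\<phi> x)} \<le> m \<Longrightarrow>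
         \<exists>\<psi>. bij_betw \<psi> P I \<and> (\<forall>x\<in>P. x \<notin> B (\<psi> x))"
proof (induction m arbitrary: \<phi>)
  case 0
  then have "{x\<in>P. x \<in> B (\<phi> x)} = {}" using finP by simp
  then show ?case using 0 by blast
next
  case (Suc m)
  show ?case
  proof (cases "card {x\<in>P. x \<in> B (\<phi> x)} \<le> m")
    case True then show ?thesis using Suc by blast
  next
    case False
    then have cbad: "card {x\<in>P. x \<in> B (\<phi> x)} = Suc m" using Suc by simp
    then obtain p where p: "p \<in> P" "p \<in> B (\<phi> p)"
      by (metis (no_types, lifting) card.empty empty_Collect_eq nat.distinct(1))
    have bij: "bij_betw \<phi> P I" using Suc by blast
    define Q1 where "Q1 = {q\<in>P. p \<notin> B (\<phi> q)}"
    define Q2 where "Q2 = P - B (\<phi> p)"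
    have "\<phi> ` Q1 = {i\<in>I. p \<notin> B i}" using bij unfolding Q1_def bij_betw_def by auto
    moreover have "inj_on \<phi> Q1" using bij unfolding Q1_def bij_betw_def
      by (auto intro: inj_on_subset)
    ultimately have "card Q1 = card {i\<in>I. p \<notin> B i}" by (metis card_image)
    also have "{i\<in>I. p \<notin> B i} = I - {i\<in>I. p \<in> B i}" by auto
    also have "card \<dots> = card I - k" using cnt p(1) finI by (simp add: card_Diff_subset)
    finally have c1: "card Q1 = card P - k" using cI by simp
    have pI: "\<phi> p \<in> I" using bij p(1) bij_betw_apply by fast
    have c2: "card Q2 = card P - k" unfolding Q2_def using Bsub cB pI finP
      by (metis card_Diff_subset rev_finite_subset)
    have "Q1 \<inter> Q2 \<noteq> {}"
    proof
      assume e: "Q1 \<inter> Q2 = {}"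
      have "card (Q1 \<union> Q2) = card Q1 + card Q2" using e finP
        by (intro card_Un_disjoint) (auto simp: Q1_def Q2_def)
      moreover have "card (Q1 \<union> Q2) \<le> card P" using finP
        by (intro card_mono) (auto simp: Q1_def Q2_def)
      ultimately show False using c1 c2 big by simp
    qed
    then obtain q where q: "q \<in> P" "p \<notin> B (\<phi> q)" "q \<notin> B (\<phi> p)"
      unfolding Q1_def Q2_def by auto
    have pq: "p \<noteq> q" using p q by auto
    define \<phi>' where "\<phi>' = \<phi>(p := \<phi> q, q := \<phi> p)"
    have inj: "inj_on \<phi> P" and img: "\<phi> ` P = I" using bij unfolding bij_betw_def by auto
    have "inj_on \<phi>' P" unfolding inj_on_def \<phi>'_def
      using inj p(1) q(1) pq by (auto simp: inj_on_def)
    moreover have "\<phi>' ` P = I"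
    proof
      show "\<phi>' ` P \<subseteq> I" unfolding \<phi>'_def using img p(1) q(1) by auto
      show "I \<subseteq> \<phi>' ` P"
      proof
        fix i assume "i \<in> I"
        then obtain x where x: "x \<in> P" "\<phi> x = i" using img by auto
        show "i \<in> \<phi>' ` P"
        proof (cases "x = p")
          case True then show ?thesis using x q(1) pq unfolding \<phi>'_def by (auto intro!: image_eqI[of _ _ q])
        next
          case False
          show ?thesis
          proof (cases "x = q")
            case True then show ?thesis using x p(1) pq unfolding \<phi>'_def by (auto intro!: image_eqI[of _ _ p])
          next
            case False2: False
            then show ?thesis using x False unfolding \<phi>'_def by (auto intro!: image_eqI[of _ _ x])
          qed
        qed
      qed
    qed
    ultimately have bij': "bij_betw \<phi>' P I" unfolding bij_betw_def by simp
    have sub: "{x\<in>P. x \<in> B (\<phi>' x)} \<subseteq> {x\<in>P. x \<in> B (\<phi> x)} - {p}"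
      using q pq unfolding \<phi>'_def by auto
    have "card {x\<in>P. x \<in> B (\<phi>' x)} \<le> card ({x\<in>P. x \<in> B (\<phi> x)} - {p})"
      using finP by (intro card_mono[OF _ sub]) auto
    also have "\<dots> = m" using cbad p finP by simp
    finally show ?thesis using Suc.IH bij' by blast
  qed
qed


lemma fwd:
  assumes k2: "k \<ge> 2" and reg: "regular_digraph k V A" and fr: "friendship_digraph V A"
  shows "sbibd (k^2 - k + 1) k 1 V V (\<lambda>z. {x. (x, z) \<in> A})"
proof -
  have finV: "finite V" and AV: "A \<subseteq> V \<times> V" and cV: "card V \<ge> 2"
    using reg fr unfolding regular_digraph_def friendship_digraph_def digraph_def by auto
  have outd: "\<And>x. x \<in> V \<Longrightarrow> card {y. (x, y) \<in> A} = k"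
   and ind: "\<And>x. x \<in> V \<Longrightarrow> card {y. (y, x) \<in> A} = k"
    using reg unfolding regular_digraph_def by auto
  have uniq: "\<And>x y. x \<in> V \<Longrightarrow> y \<in> V \<Longrightarrow> x \<noteq> y \<Longrightarrow> \<exists>!z. (x, z) \<in> A \<and> (y, z) \<in> A"
    using fr unfolding friendship_digraph_def by auto
  have noloop: "\<And>x. (x, x) \<notin> A" using reg unfolding regular_digraph_def digraph_def by auto
  obtain x0 where x0: "x0 \<in> V" using cV by fastforce
  define N where "N = {z. (x0, z) \<in> A}"
  define C where "C = (\<lambda>z. {y. (y, z) \<in> A} - {x0})"
  have finN: "finite N" unfolding N_def using AV finV by (auto intro: finite_subset)
  have eq: "V - {x0} = \<Union> (C ` N)"
  proof
    show "V - {x0} \<subseteq> \<Union> (C ` N)"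
    proof
      fix y assume y: "y \<in> V - {x0}"
      then obtain z where "(x0, z) \<in> A" "(y, z) \<in> A" using uniq[of x0 y] x0 by auto
      then show "y \<in> \<Union> (C ` N)" using y unfolding N_def C_def by auto
    qed
    show "\<Union> (C ` N) \<subseteq> V - {x0}" unfolding N_def C_def using AV by auto
  qed
  have "card (\<Union> (C ` N)) = (\<Sum>z\<in>N. card (C z))"
  proof (rule card_UN_disjoint[OF finN])
    show "\<forall>i\<in>N. finite (C i)" unfolding C_def using AV finV by (auto intro: finite_subset)
    show "\<forall>i\<in>N. \<forall>j\<in>N. i \<noteq> j \<longrightarrow> C i \<inter> C j = {}"
    proof (intro ballI impI)
      fix i j assume ij: "i \<in> N" "j \<in> N" "i \<noteq> j"
      show "C i \<inter> C j = {}"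
      proof (rule ccontr)
        assume "C i \<inter> C j \<noteq> {}"
        then obtain y where y: "(y, i) \<in> A" "(y, j) \<in> A" "y \<noteq> x0" unfolding C_def by auto
        have "y \<in> V" using y AV by auto
        then show False using uniq[of x0 y] x0 y ij unfolding N_def by blast
      qed
    qed
  qed
  also have "\<dots> = (\<Sum>z\<in>N. k - 1)"
  proof (rule sum.cong)
    fix z assume z: "z \<in> N"
    then have "z \<in> V" using AV unfolding N_def by auto
    then show "card (C z) = k - 1" unfolding C_def using z ind[of z] unfolding N_def
      by (simp add: card_Diff_singleton_if)
  qed simp
  also have "\<dots> = k * (k - 1)" using outd[OF x0] unfolding N_def by simp
  finally have "card (V - {x0}) = k * (k - 1)" using eq by simp
  then have "card V - 1 = k * (k - 1)" using x0 finV by simp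
  moreover have "k^2 - k = k * (k - 1)" by (simp add: power2_eq_square diff_mult_distrib2)
  ultimately have cardV: "card V = k^2 - k + 1" using cV by linarith
  have b1: "\<forall>i\<in>V. {x. (x, i) \<in> A} \<subseteq> V \<and> card {x. (x, i) \<in> A} = k"
    using AV ind by blast
  have b2: "\<forall>x\<in>V. card {i\<in>V. x \<in> {x. (x, i) \<in> A}} = k"
  proof
    fix x assume x: "x \<in> V"
    have "{i\<in>V. x \<in> {x. (x, i) \<in> A}} = {y. (x, y) \<in> A}" using AV by blast
    then show "card {i\<in>V. x \<in> {x. (x, i) \<in> A}} = k" using outd x by simp
  qed
  have b3: "\<forall>x\<in>V. \<forall>y\<in>V. x \<noteq> y \<longrightarrow> card {i\<in>V. x \<in> {x. (x, i) \<in> A} \<and> y \<in> {x. (x, i) \<in> A}} = 1"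
  proof (intro ballI impI)
    fix x y assume xy: "x \<in> V" "y \<in> V" "x \<noteq> y"
    from uniq[OF xy] obtain z where z: "(x, z) \<in> A \<and> (y, z) \<in> A"
      and zu: "\<And>w. (x, w) \<in> A \<and> (y, w) \<in> A \<Longrightarrow> w = z" by (elim ex1E) blast
    have zV: "z \<in> V" using z AV by blast
    have "{i\<in>V. x \<in> {x. (x, i) \<in> A} \<and> y \<in> {x. (x, i) \<in> A}} = {z}"
    proof
      show "{z} \<subseteq> {i\<in>V. x \<in> {x. (x, i) \<in> A} \<and> y \<in> {x. (x, i) \<in> A}}" using z zV by simp
      show "{i\<in>V. x \<in> {x. (x, i) \<in> A} \<and> y \<in> {x. (x, i) \<in> A}} \<subseteq> {z}"
        using zu by blast
    qed
    then show "card {i\<in>V. x \<in> {x. (x, i) \<in> A} \<and> y \<in> {x. (x, i) \<in> A}} = 1" by simp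
  qed
  show ?thesis unfolding sbibd_def using finV cardV b1 b2 b3 by blast
qed

lemma k2_case: "\<exists>(V :: nat set) A. regular_digraph 2 V A \<and> friendship_digraph V A"
proof -
  define V :: "nat set" where "V = {0,1,2}"
  define A :: "(nat \<times> nat) set" where "A = {(0,1),(0,2),(1,0),(1,2),(2,0),(2,1)}"
  have o: "{y. (0, y) \<in> A} = {1,2}" "{y. (1, y) \<in> A} = {0,2}" "{y. (2, y) \<in> A} = {0,1}"
       "{y. (y, 0) \<in> A} = {1,2}" "{y. (y, 1) \<in> A} = {0,2}" "{y. (y, 2) \<in> A} = {0,1}"
    unfolding A_def by auto
  have dig: "digraph V A" unfolding digraph_def V_def A_def by auto
  have "regular_digraph 2 V A" unfolding regular_digraph_def
    using dig o by (simp add: V_def)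
  moreover have "friendship_digraph V A" unfolding friendship_digraph_def
  proof (intro conjI dig)
    show "2 \<le> card V" unfolding V_def by simp
    have u: "\<And>x y. x \<in> V \<Longrightarrow> y \<in> V \<Longrightarrow> x \<noteq> y \<Longrightarrow> (\<exists>!z. (x, z) \<in> A \<and> (y, z) \<in> A)"
    proof -
      fix x y assume "x \<in> V" "y \<in> V" "x \<noteq> y"
      then have "(x = 0 \<and> y = 1) \<or> (x = 0 \<and> y = 2) \<or> (x = 1 \<and> y = 0) \<or> (x = 1 \<and> y = 2)
         \<or> (x = 2 \<and> y = 0) \<or> (x = 2 \<and> y = 1)" unfolding V_def by auto
      then show "\<exists>!z. (x, z) \<in> A \<and> (y, z) \<in> A" unfolding A_def by (elim disjE) auto
    qed
    then show "\<forall>x\<in>V. \<forall>y\<in>V. x \<noteq> y \<longrightarrow> (\<exists>!z. (x, z) \<in> A \<and> (y, z) \<in> A)" by blast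
  qed
  ultimately show ?thesis by blast
qed

lemma bwd:
  fixes P :: "'a set" and I :: "'i set" and B :: "'i \<Rightarrow> 'a set"
  assumes k3: "k \<ge> 3" and d: "sbibd (k^2 - k + 1) k 1 P I B"
  shows "\<exists>(V :: 'a set) A. regular_digraph k V A \<and> friendship_digraph V A"
proof -
  have finP: "finite P" and finI: "finite I" and cP: "card P = k^2 - k + 1"
    and cI: "card I = card P" and Bsub: "\<forall>i\<in>I. B i \<subseteq> P"
    and cnt: "\<forall>x\<in>P. card {i\<in>I. x \<in> B i} = k" and cB: "\<forall>i\<in>I. card (B i) = k"
    and lam: "\<And>x y. x \<in> P \<Longrightarrow> y \<in> P \<Longrightarrow> x \<noteq> y \<Longrightarrow> card {i\<in>I. x \<in> B i \<and> y \<in> B i} = 1"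
    using d unfolding sbibd_def by auto
  have big: "card P < 2 * (card P - k)"
  proof -
    obtain j where j: "k = j + 3" using k3 by (metis add.commute le_iff_add)
    have "k^2 = j*j + 6*j + 9" unfolding j by (simp add: power2_eq_square algebra_simps)
    then show ?thesis unfolding cP j by simp
  qed
  obtain \<phi>0 where b0: "bij_betw \<phi>0 P I" using finite_same_card_bij[OF finP finI] cI by metis
  have "card {x\<in>P. x \<in> B (\<phi>0 x)} \<le> card P" using finP by (intro card_mono) auto
  then obtain \<phi> where bij: "bij_betw \<phi> P I" and good: "\<forall>x\<in>P. x \<notin> B (\<phi> x)"
    using derange_step[OF finP finI cI Bsub cnt cB big, of \<phi>0 "card P"] b0 by blast
  have inj: "inj_on \<phi> P" and img: "\<phi> ` P = I" using bij unfolding bij_betw_def by auto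
  define A where "A = {(x,y). x \<in> P \<and> y \<in> P \<and> x \<in> B (\<phi> y)}"
  have cardimg: "\<And>S. S \<subseteq> P \<Longrightarrow> card S = card (\<phi> ` S)"
    using inj by (metis card_image inj_on_subset)
  have dig: "digraph P A" unfolding digraph_def A_def using finP good by auto
  have "regular_digraph k P A" unfolding regular_digraph_def
  proof (intro conjI ballI dig)
    fix x assume x: "x \<in> P"
    have "\<phi> ` {y. (x, y) \<in> A} = {i\<in>I. x \<in> B i}" unfolding A_def using img x by auto
    moreover have "{y. (x, y) \<in> A} \<subseteq> P" unfolding A_def by auto
    ultimately have "card {y. (x, y) \<in> A} = card {i\<in>I. x \<in> B i}" using cardimg by simp
    then show "card {y. (x, y) \<in> A} = k" using cnt x by simp
    have "{y. (y, x) \<in> A} = B (\<phi> x)" unfolding A_def using x Bsub img by auto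
    then show "card {y. (y, x) \<in> A} = k" using cB img x by auto
  qed
  moreover have "friendship_digraph P A" unfolding friendship_digraph_def
  proof (intro conjI ballI impI dig)
    show "card P \<ge> 2" using big k3 by arith
  next
    fix x y assume xy: "x \<in> P" "y \<in> P" "x \<noteq> y"
    define Z where "Z = {z. (x, z) \<in> A \<and> (y, z) \<in> A}"
    have "\<phi> ` Z = {i\<in>I. x \<in> B i \<and> y \<in> B i}" unfolding Z_def A_def using img xy by auto
    moreover have "Z \<subseteq> P" unfolding Z_def A_def by auto
    ultimately have "card Z = card {i\<in>I. x \<in> B i \<and> y \<in> B i}" using cardimg by simp
    then have "card Z = 1" using lam xy by simp
    then obtain z where zz: "Z = {z}" using card_1_singleton_iff by (metis One_nat_def)
    show "\<exists>!z. (x, z) \<in> A \<and> (y, z) \<in> A"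
    proof
      show "(x, z) \<in> A \<and> (y, z) \<in> A" using zz unfolding Z_def by blast
      fix w assume "(x, w) \<in> A \<and> (y, w) \<in> A"
      then have "w \<in> Z" unfolding Z_def by blast
      then show "w = z" using zz by blast
    qed
  qed
  ultimately show ?thesis by blast
qed

theorem theorem1p2:
  fixes k :: nat
  assumes "k \<ge> 2"
  shows "(\<exists>(V :: nat set) A. regular_digraph k V A \<and> friendship_digraph V A) \<longleftrightarrow>
         (\<exists>(P :: nat set) (I :: nat set) (B :: nat \<Rightarrow> nat set). sbibd (k^2 - k + 1) k 1 P I B)"
proof
  assume "\<exists>(V :: nat set) A. regular_digraph k V A \<and> friendship_digraph V A"
  then show "\<exists>(P :: nat set) (I :: nat set) (B :: nat \<Rightarrow> nat set). sbibd (k^2 - k + 1) k 1 P I B"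
    using fwd[OF assms] by blast
next
  assume d: "\<exists>(P :: nat set) (I :: nat set) (B :: nat \<Rightarrow> nat set). sbibd (k^2 - k + 1) k 1 P I B"
  show "\<exists>(V :: nat set) A. regular_digraph k V A \<and> friendship_digraph V A"
  proof (cases "k = 2")
    case True then show ?thesis using k2_case by simp
  next
    case False
    then have "k \<ge> 3" using assms by simp
    then show ?thesis using d bwd by blast
  qed
qed

end
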